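(* For all integers $k,l\ge1$, $sat^*([k]\times[l],\{\vee_2,\wedge_2\})=\max\{k,l\}$.
   Context: $[k]\times[l]$ is ordered coordinatewise. $\vee_2$ is the poset on three elements $a,b_1,b_2$ whose only relations are $a<b_1,a<b_2$; $\wedge_2$ is the poset on three elements $a,b_1,b_2$ whose only relations are $b_1<a,b_2<a$. For posets $P,R$, $P$ is a strong subposet of $R$ if there is an injection $i:P\to R$ with $p\le_P p'\iff i(p)\le_R i(p')$. A subset $F\subseteq Q$ is strong $\{\vee_2,\wedge_2\}$-saturated if neither $\vee_2$ nor $\wedge_2$ is a strong subposet of $F$, but for every $x\in Q\setminus F$, at least one of $\vee_2,\wedge_2$ is a strong subposet of $F\cup\{x\}$. $sat^*(Q,\{\vee_2,\wedge_2\})$ is the minimum size of such a subset. *)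

theory Defs
  imports Main
begin

definition grid :: "nat \<Rightarrow> nat \<Rightarrow> (nat \<times> nat) set" where
  "grid k l = {1..k} \<times> {1..l}"

definition grid_le :: "nat \<times> nat \<Rightarrow> nat \<times> nat \<Rightarrow> bool" where
  "grid_le p q \<longleftrightarrow> fst p \<le> fst q \<and> snd p \<le> snd q"

definition strong_subposet ::
  "'a set \<Rightarrow> ('a \<Rightarrow> 'a \<Rightarrow> bool) \<Rightarrow> 'b set \<Rightarrow> ('b \<Rightarrow> 'b \<Rightarrow> bool) \<Rightarrow> bool" where
  "strong_subposet P leP R leR \<longleftrightarrow>
     (\<exists>i. inj_on i P \<and> i ` P \<subseteq> R \<and>
          (\<forall>p\<in>P. \<forall>p'\<in>P. leP p p' \<longleftrightarrow> leR (i p) (i p')))"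

text \<open>The three-element posets: element 0 plays a, elements 1, 2 play b1, b2.\<close>
definition three :: "nat set" where "three = {0, 1, 2}"

definition vee2_le :: "nat \<Rightarrow> nat \<Rightarrow> bool" where
  "vee2_le x y \<longleftrightarrow> x = y \<or> x = 0"

definition wedge2_le :: "nat \<Rightarrow> nat \<Rightarrow> bool" where
  "wedge2_le x y \<longleftrightarrow> x = y \<or> y = 0"

definition contains_vee_or_wedge :: "(nat \<times> nat) set \<Rightarrow> bool" where
  "contains_vee_or_wedge F \<longleftrightarrow>
     strong_subposet three vee2_le F grid_le \<or> strong_subposet three wedge2_le F grid_le"

definition strong_sat :: "nat \<Rightarrow> nat \<Rightarrow> (nat \<times> nat) set \<Rightarrow> bool" where
  "strong_sat k l F \<longleftrightarrow> F \<subseteq> grid k l \<and> \<not> contains_vee_or_wedge F \<and>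
     (\<forall>x \<in> grid k l - F. contains_vee_or_wedge (insert x F))"

definition sat_star :: "nat \<Rightarrow> nat \<Rightarrow> nat" where
  "sat_star k l = Min (card ` {F. strong_sat k l F})"

end

theory Submission imports Defs begin

definition cmp :: "nat \<times> nat \<Rightarrow> nat \<times> nat \<Rightarrow> bool" where
  "cmp p q \<longleftrightarrow> grid_le p q \<or> grid_le q p"

definition vw :: "(nat \<times> nat) set \<Rightarrow> bool" where
  "vw F \<longleftrightarrow> (\<exists>a\<in>F. \<exists>b\<in>F. \<exists>c\<in>F. cmp a b \<and> cmp a c \<and> \<not> cmp b c)"

lemma grid_le_antisym: "grid_le p q \<Longrightarrow> grid_le q p \<Longrightarrow> p = q"
  unfolding grid_le_def by (simp add: prod_eq_iff)

lemma cvw_imp_vw: assumes "contains_vee_or_wedge F" shows "vw F"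
proof -
  from assms consider (v) i where "inj_on i three" "i ` three \<subseteq> F"
      "\<forall>p\<in>three. \<forall>p'\<in>three. vee2_le p p' \<longleftrightarrow> grid_le (i p) (i p')"
    | (w) i where "inj_on i three" "i ` three \<subseteq> F"
      "\<forall>p\<in>three. \<forall>p'\<in>three. wedge2_le p p' \<longleftrightarrow> grid_le (i p) (i p')"
    unfolding contains_vee_or_wedge_def strong_subposet_def by blast
  then show ?thesis
  proof cases
    case v
    have "0 \<in> three" "1 \<in> three" "2 \<in> three" by (auto simp: three_def)
    have e: "vee2_le p p' \<longleftrightarrow> grid_le (i p) (i p')" if "p \<in> three" "p' \<in> three" for p p'
      using v(3) that by blast
    have "i 0 \<in> F" "i 1 \<in> F" "i 2 \<in> F" using v(2) \<open>0 \<in> three\<close> \<open>1 \<in> three\<close> \<open>2 \<in> three\<close> by auto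
    moreover have "grid_le (i 0) (i 1)" "grid_le (i 0) (i 2)"
      "\<not> grid_le (i 1) (i 2)" "\<not> grid_le (i 2) (i 1)"
      using e[of 0 1] e[of 0 2] e[of 1 2] e[of 2 1] \<open>0 \<in> three\<close> \<open>1 \<in> three\<close> \<open>2 \<in> three\<close>
      by (simp_all add: vee2_le_def)
    ultimately show ?thesis unfolding vw_def cmp_def by blast
  next
    case w
    have "0 \<in> three" "1 \<in> three" "2 \<in> three" by (auto simp: three_def)
    have e: "wedge2_le p p' \<longleftrightarrow> grid_le (i p) (i p')" if "p \<in> three" "p' \<in> three" for p p'
      using w(3) that by blast
    have "i 0 \<in> F" "i 1 \<in> F" "i 2 \<in> F" using w(2) \<open>0 \<in> three\<close> \<open>1 \<in> three\<close> \<open>2 \<in> three\<close> by auto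
    moreover have "grid_le (i 1) (i 0)" "grid_le (i 2) (i 0)"
      "\<not> grid_le (i 1) (i 2)" "\<not> grid_le (i 2) (i 1)"
      using e[of 1 0] e[of 2 0] e[of 1 2] e[of 2 1] \<open>0 \<in> three\<close> \<open>1 \<in> three\<close> \<open>2 \<in> three\<close>
      by (simp_all add: wedge2_le_def)
    ultimately show ?thesis unfolding vw_def cmp_def by blast
  qed
qed

lemma vw_imp_cvw: assumes "vw F" shows "contains_vee_or_wedge F"
proof -
  from assms obtain a b c where abc: "a \<in> F" "b \<in> F" "c \<in> F" "cmp a b" "cmp a c" "\<not> cmp b c"
    unfolding vw_def by blast
  define i where "i = (\<lambda>n::nat. if n = 0 then a else if n = 1 then b else c)"
  have nbc: "\<not> grid_le b c" "\<not> grid_le c b" using abc(6) by (auto simp: cmp_def)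
  have refl: "\<And>p. grid_le p p" by (simp add: grid_le_def)
  have tr: "grid_le p q \<Longrightarrow> grid_le q r \<Longrightarrow> grid_le p r" for p q r by (auto simp: grid_le_def)
  have dist: "a \<noteq> b" "a \<noteq> c" "b \<noteq> c" using abc nbc refl unfolding cmp_def by metis+
  have inj: "inj_on i three" unfolding inj_on_def three_def i_def using dist by auto
  have img: "i ` three \<subseteq> F" unfolding three_def i_def using abc by auto
  consider "grid_le a b \<and> grid_le a c" | "grid_le b a \<and> grid_le c a"
    using abc(4,5) nbc tr unfolding cmp_def by blast
  then show ?thesis
  proof cases
    case 1
    then have "\<not> grid_le b a" "\<not> grid_le c a" using dist grid_le_antisym by blast+
    then have "\<forall>p\<in>three. \<forall>p'\<in>three. vee2_le p p' \<longleftrightarrow> grid_le (i p) (i p')"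
      using 1 nbc refl unfolding three_def i_def vee2_le_def by auto
    then show ?thesis using inj img unfolding contains_vee_or_wedge_def strong_subposet_def by blast
  next
    case 2
    then have "\<not> grid_le a b" "\<not> grid_le a c" using dist grid_le_antisym by blast+
    then have "\<forall>p\<in>three. \<forall>p'\<in>three. wedge2_le p p' \<longleftrightarrow> grid_le (i p) (i p')"
      using 2 nbc refl unfolding three_def i_def wedge2_le_def by auto
    then show ?thesis using inj img unfolding contains_vee_or_wedge_def strong_subposet_def by blast
  qed
qed

lemma cvw_iff: "contains_vee_or_wedge F \<longleftrightarrow> vw F"
  using cvw_imp_vw vw_imp_cvw by blast


lemma sat_iff: "strong_sat k l F \<longleftrightarrow> F \<subseteq> grid k l \<and> \<not> vw F \<and>
     (\<forall>x \<in> grid k l - F. vw (insert x F))"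
  unfolding strong_sat_def cvw_iff by blast

lemma cmp_refl: "cmp p p" by (simp add: cmp_def grid_le_def)
lemma cmp_sym: "cmp p q = cmp q p" by (auto simp: cmp_def)

lemma clone:
  assumes "\<not> vw F" "q \<in> F" "\<And>s. s \<in> F \<Longrightarrow> cmp x s \<longleftrightarrow> cmp q s"
  shows "\<not> vw (insert x F)"
proof
  assume "vw (insert x F)"
  then obtain a b c where abc: "a \<in> insert x F" "b \<in> insert x F" "c \<in> insert x F"
    "cmp a b" "cmp a c" "\<not> cmp b c" unfolding vw_def by blast
  define \<sigma> where "\<sigma> y = (if y = x then q else y)" for y
  have inF: "y \<in> insert x F \<Longrightarrow> \<sigma> y \<in> F" for y using assms(2) by (auto simp: \<sigma>_def)
  have key: "cmp (\<sigma> y) (\<sigma> z) = cmp y z" if "y \<in> insert x F" "z \<in> insert x F" for y z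
  proof -
    have a3: "s \<in> F \<Longrightarrow> cmp s x \<longleftrightarrow> cmp s q" for s using assms(3) cmp_sym by metis
    show ?thesis using that assms(3) a3 cmp_refl unfolding \<sigma>_def by (cases "y = x"; cases "z = x") auto
  qed
  have "vw F" unfolding vw_def
    using inF[OF abc(1)] inF[OF abc(2)] inF[OF abc(3)] key[OF abc(1,2)] key[OF abc(1,3)]
      key[OF abc(2,3)] abc(4-6) by blast
  with assms(1) show False by blast
qed

lemma vw_image:
  assumes "\<forall>p\<in>G. \<forall>q\<in>G. cmp (h p) (h q) = cmp p q" "A \<subseteq> G"
  shows "vw (h ` A) = vw A"
proof -
  have "vw (h ` A) \<longleftrightarrow> (\<exists>a\<in>A. \<exists>b\<in>A. \<exists>c\<in>A. cmp (h a) (h b) \<and> cmp (h a) (h c) \<and> \<not> cmp (h b) (h c))"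
    unfolding vw_def by blast
  also have "\<dots> \<longleftrightarrow> vw A"
  proof -
    have e: "a \<in> A \<Longrightarrow> b \<in> A \<Longrightarrow> cmp (h a) (h b) = cmp a b" for a b using assms by blast
    show ?thesis unfolding vw_def
    proof (intro iffI; elim bexE conjE)
      fix a b c assume "a \<in> A" "b \<in> A" "c \<in> A" "cmp (h a) (h b)" "cmp (h a) (h c)" "\<not> cmp (h b) (h c)"
      then show "\<exists>a\<in>A. \<exists>b\<in>A. \<exists>c\<in>A. cmp a b \<and> cmp a c \<and> \<not> cmp b c" using e by metis
    next
      fix a b c assume "a \<in> A" "b \<in> A" "c \<in> A" "cmp a b" "cmp a c" "\<not> cmp b c"
      then show "\<exists>a\<in>A. \<exists>b\<in>A. \<exists>c\<in>A. cmp (h a) (h b) \<and> cmp (h a) (h c) \<and> \<not> cmp (h b) (h c)" using e by metis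
    qed
  qed
  finally show ?thesis .
qed

lemma sat_sym:
  assumes "bij_betw h (grid k l) (grid k' l')"
    "\<forall>p\<in>grid k l. \<forall>q\<in>grid k l. cmp (h p) (h q) = cmp p q"
    "strong_sat k l F"
  shows "strong_sat k' l' (h ` F)"
proof -
  have F: "F \<subseteq> grid k l" "\<not> vw F" "\<forall>x \<in> grid k l - F. vw (insert x F)"
    using assms(3) unfolding sat_iff by auto
  have img: "h ` grid k l = grid k' l'" using assms(1) by (simp add: bij_betw_def)
  have inj: "inj_on h (grid k l)" using assms(1) by (simp add: bij_betw_def)
  have 1: "h ` F \<subseteq> grid k' l'" using F(1) img by blast
  have 2: "\<not> vw (h ` F)" using vw_image[OF assms(2) F(1)] F(2) by simp
  have 3: "vw (insert y (h ` F))" if y: "y \<in> grid k' l' - h ` F" for y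
  proof -
    obtain x where x: "x \<in> grid k l" "y = h x" using y img by blast
    have "x \<notin> F" using x y by blast
    then have "vw (insert x F)" using F(3) x by blast
    moreover have "insert x F \<subseteq> grid k l" using x F(1) by blast
    ultimately have "vw (h ` insert x F)" using vw_image[OF assms(2)] by blast
    then show ?thesis using x by simp
  qed
  show ?thesis unfolding sat_iff using 1 2 3 by blast
qed

lemma col_main:
  assumes sat: "strong_sat k l F" and j: "1 \<le> j" "j \<le> l"
    and nj: "\<forall>p\<in>F. snd p \<noteq> j" and ex: "\<exists>p\<in>F. snd p > j"
  shows False
proof -
  have F: "F \<subseteq> grid k l" "\<not> vw F" "\<forall>x \<in> grid k l - F. vw (insert x F)"
    using sat unfolding sat_iff by auto
  have finF: "finite F" using F(1) finite_subset unfolding grid_def by blast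
  define R where "R = {p\<in>F. snd p > j}"
  have finR: "finite R" "R \<noteq> {}" using finF ex unfolding R_def by auto blast
  define m where "m = Min (snd ` R)"
  have m: "m \<in> snd ` R" "\<And>p. p \<in> R \<Longrightarrow> m \<le> snd p" using finR unfolding m_def by auto
  define R' where "R' = {p\<in>R. snd p = m}"
  have finR': "finite R'" "R' \<noteq> {}" using finR m(1) unfolding R'_def by auto
  define n where "n = Min (fst ` R')"
  have n: "n \<in> fst ` R'" "\<And>p. p \<in> R' \<Longrightarrow> n \<le> fst p" using finR' unfolding n_def by auto
  obtain q where q: "q \<in> R'" "fst q = n" using n(1) by blast
  have hq: "q \<in> F" "snd q > j" using q unfolding R'_def R_def by auto
  have hmin: "p \<in> F \<Longrightarrow> snd p > j \<Longrightarrow> snd q \<le> snd p" for p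
    using m(2) q unfolding R'_def R_def by auto
  have htie: "p \<in> F \<Longrightarrow> snd p = snd q \<Longrightarrow> fst q \<le> fst p" for p
    using n(2) q hq unfolding R'_def R_def by auto
  define x where "x = (fst q, j)"
  have xg: "x \<in> grid k l" using hq F(1) j unfolding x_def grid_def by auto
  have xF: "x \<notin> F" using nj unfolding x_def by auto
  have "cmp x s \<longleftrightarrow> cmp q s" if s: "s \<in> F" for s
  proof -
    have "snd s \<noteq> j" using nj s by blast
    then show ?thesis using hmin[OF s] htie[OF s] hq(2) unfolding cmp_def grid_le_def x_def
      by (cases q; cases s) auto
  qed
  then have "\<not> vw (insert x F)" using clone[OF F(2) hq(1)] by blast
  then show False using F(3) xg xF by blast
qed

definition rho :: "nat \<Rightarrow> nat \<Rightarrow> nat \<times> nat \<Rightarrow> nat \<times> nat" where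
  "rho k l p = (k + 1 - fst p, l + 1 - snd p)"

lemma rho_bij: "bij_betw (rho k l) (grid k l) (grid k l)"
  by (rule bij_betw_byWitness[where f' = "rho k l"]) (auto simp: rho_def grid_def)

lemma rho_cmp: "\<forall>p\<in>grid k l. \<forall>q\<in>grid k l. cmp (rho k l p) (rho k l q) = cmp p q"
  by (auto simp: rho_def grid_def cmp_def grid_le_def)

lemma col:
  assumes sat: "strong_sat k l F" and k: "1 \<le> k" and j: "1 \<le> j" "j \<le> l"
  shows "\<exists>p\<in>F. snd p = j"
proof (rule ccontr)
  assume nj: "\<not> (\<exists>p\<in>F. snd p = j)"
  have F: "F \<subseteq> grid k l" "\<not> vw F" "\<forall>x \<in> grid k l - F. vw (insert x F)"
    using sat unfolding sat_iff by auto
  show False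
  proof (cases "\<exists>p\<in>F. snd p > j")
    case True
    then show ?thesis using col_main[OF sat j] nj by blast
  next
    case False
    show ?thesis
    proof (cases "F = {}")
      case True
      have "(1, j) \<in> grid k l" using k j by (simp add: grid_def)
      then have "vw {(1,j)}" using F(3) True by auto
      then show ?thesis unfolding vw_def using cmp_refl by auto
    next
      case ne: False
      then obtain p where p: "p \<in> F" by blast
      have sat': "strong_sat k l (rho k l ` F)" using sat_sym[OF rho_bij rho_cmp sat] .
      have j': "1 \<le> l + 1 - j" "l + 1 - j \<le> l" using j by auto
      have "snd p < j" using p False nj by (metis linorder_neqE_nat)
      then have "\<exists>p\<in>rho k l ` F. snd p > l + 1 - j" using p F(1) j
        by (intro bexI[of _ "rho k l p"]) (auto simp: rho_def grid_def)
      moreover have "\<forall>p\<in>rho k l ` F. snd p \<noteq> l + 1 - j" using nj F(1) j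
        by (auto simp: rho_def grid_def)
      ultimately show ?thesis using col_main[OF sat' j'] by blast
    qed
  qed
qed

lemma swap_bij: "bij_betw prod.swap (grid k l) (grid l k)"
  by (rule bij_betw_byWitness[where f' = "prod.swap"]) (auto simp: grid_def)

lemma swap_cmp: "\<forall>p\<in>grid k l. \<forall>q\<in>grid k l. cmp (prod.swap p) (prod.swap q) = cmp p q"
  by (auto simp: grid_def cmp_def grid_le_def)

lemma row:
  assumes sat: "strong_sat k l F" and l: "1 \<le> l" and i: "1 \<le> i" "i \<le> k"
  shows "\<exists>p\<in>F. fst p = i"
proof -
  have "strong_sat l k (prod.swap ` F)" using sat_sym[OF swap_bij swap_cmp sat] .
  from col[OF this l i] show ?thesis by auto
qed

lemma lower:
  assumes sat: "strong_sat k l F" and "1 \<le> k" "1 \<le> l"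
  shows "max k l \<le> card F"
proof -
  have finF: "finite F" using sat finite_subset unfolding strong_sat_def grid_def by blast
  have "{1..l} \<subseteq> snd ` F" using col[OF sat assms(2)] by force
  then have "l \<le> card (snd ` F)" using card_mono[OF finite_imageI[OF finF]] by fastforce
  also have "\<dots> \<le> card F" using card_image_le[OF finF] .
  finally have a: "l \<le> card F" .
  have "{1..k} \<subseteq> fst ` F" using row[OF sat assms(3)] by force
  then have "k \<le> card (fst ` F)" using card_mono[OF finite_imageI[OF finF]] by fastforce
  also have "\<dots> \<le> card F" using card_image_le[OF finF] .
  finally have b: "k \<le> card F" .
  show ?thesis using a b by simp
qed


definition g0 :: "nat \<Rightarrow> nat \<Rightarrow> nat \<Rightarrow> nat \<times> nat" where
  "g0 k l t = (min k (l + 1 - t), t)"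

lemma g0_cmp:
  assumes "1 \<le> s" "s \<le> l" "1 \<le> t" "t \<le> l"
  shows "cmp (g0 k l s) (g0 k l t) \<longleftrightarrow> s = t \<or> (k \<le> l + 1 - s \<and> k \<le> l + 1 - t)"
  using assms unfolding g0_def cmp_def grid_le_def by auto

lemma constr:
  assumes "1 \<le> k" "k \<le> l"
  shows "strong_sat k l (g0 k l ` {1..l})"
proof -
  let ?F = "g0 k l ` {1..l}"
  have 1: "?F \<subseteq> grid k l" using assms by (auto simp: g0_def grid_def)
  have 2: "\<not> vw ?F"
  proof
    assume "vw ?F"
    then obtain s t u where stu: "s \<in> {1..l}" "t \<in> {1..l}" "u \<in> {1..l}"
      "cmp (g0 k l s) (g0 k l t)" "cmp (g0 k l s) (g0 k l u)" "\<not> cmp (g0 k l t) (g0 k l u)"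
      unfolding vw_def by blast
    then show False using g0_cmp[of s l t k] g0_cmp[of s l u k] g0_cmp[of t l u k] by auto
  qed
  have 3: "vw (insert x ?F)" if x: "x \<in> grid k l - ?F" for x
  proof -
    obtain a b where ab: "x = (a, b)" by fastforce
    have r: "1 \<le> a" "a \<le> k" "1 \<le> b" "b \<le> l" using x ab by (auto simp: grid_def)
    have ne: "a \<noteq> min k (l + 1 - b)"
    proof
      assume "a = min k (l + 1 - b)"
      then have "x = g0 k l b" using ab by (simp add: g0_def)
      then show False using x r by auto
    qed
    have m1: "g0 k l b \<in> insert x ?F" using r by auto
    have "l + 1 - a \<in> {1..l}" using r assms by auto
    then have m2: "g0 k l (l + 1 - a) \<in> insert x ?F" by blast
    have "cmp x (g0 k l b)" "cmp x (g0 k l (l + 1 - a))" "\<not> cmp (g0 k l b) (g0 k l (l + 1 - a))"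
      using ne r assms unfolding ab g0_def cmp_def grid_le_def by auto
    then show ?thesis unfolding vw_def using m1 m2 by blast
  qed
  show ?thesis unfolding sat_iff using 1 2 3 by blast
qed

lemma constr_card: "card (g0 k l ` {1..l}) = l"
proof -
  have "inj_on (g0 k l) {1..l}" by (auto simp: inj_on_def g0_def)
  then show ?thesis by (simp add: card_image)
qed

lemma exists_opt:
  assumes "1 \<le> k" "1 \<le> l"
  shows "\<exists>F. strong_sat k l F \<and> card F = max k l"
proof (cases "k \<le> l")
  case True
  then show ?thesis using constr[OF assms(1) True] constr_card by (metis max.absorb2)
next
  case False
  then have le: "l \<le> k" by simp
  have s: "strong_sat l k (g0 l k ` {1..k})" using constr[OF assms(2) le] .
  have "strong_sat k l (prod.swap ` (g0 l k ` {1..k}))" using sat_sym[OF swap_bij swap_cmp s] .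
  moreover have "card (prod.swap ` (g0 l k ` {1..k})) = k"
    using constr_card[of l k] by (simp add: card_image)
  ultimately show ?thesis using le by (metis max.absorb1)
qed

theorem theorem1p9:
  fixes k l :: nat
  assumes "k \<ge> 1" and "l \<ge> 1"
  shows "sat_star k l = max k l"
proof -
  let ?A = "card ` {F. strong_sat k l F}"
  have "{F. strong_sat k l F} \<subseteq> Pow (grid k l)" by (auto simp: strong_sat_def)
  moreover have "finite (Pow (grid k l))" by (simp add: grid_def)
  ultimately have fin: "finite ?A" by (meson finite_imageI finite_subset)
  obtain F0 where F0: "strong_sat k l F0" "card F0 = max k l" using exists_opt assms by blast
  have mem: "max k l \<in> ?A" using F0 by force
  have lb: "\<forall>y\<in>?A. max k l \<le> y" using lower assms by blast
  show ?thesis unfolding sat_star_def using Min_eqI[OF fin] mem lb by blast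
qed

end
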